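(* Let $Q=(G\leftleftarrows A)$ be a group-like graph and let $X\subseteq A$ be the set of arrows with source $1\in G$. Then product $n$-cubes of $Q$ are in one-to-one correspondence with $(n+1)$-tuples $(g,x_1,\dots,x_n)$ with $g\in G$ and $x_1,\dots,x_n\in X$; explicitly, every product $n$-cube can be written uniquely as $(g\cdot x_1)\,\square\,x_2\,\square\cdots\square\,x_n$, where $g\cdot x_1$ denotes the left action of $g$ on the arrow $x_1$ via $\mu$.
   Context: Graphs are directed graphs $(V\overset{s}{\underset{t}{\leftleftarrows}}A)$, possibly with loops and multiple edges; the Cartesian product $Q_1\,\square\,Q_2$ has vertex set $V_1\times V_2$, arrows $A_1\times V_2\sqcup V_1\times A_2$, source $s_1\times\mathrm{id}\sqcup\mathrm{id}\times s_2$, target $t_1\times\mathrm{id}\sqcup\mathrm{id}\times t_2$. A multiplicative graph is a graph $Q$ with a morphism $\mu:Q\,\square\,Q\to Q$ with $\mu\circ(\mu\,\square\,\mathrm{id})=\mu\circ(\mathrm{id}\,\square\,\mu)$; it is group-like if the semigroup of vertices is a group $G$. The multiplication gives a two-sided action of $G$ on the arrows: $g\cdot a=\mu(g,a)$, $a\cdot g=\mu(a,g)$. Let $\mathrm{Q}_1$ be the graph with two vertices and one arrow, $\mathrm{Q}_n=\mathrm{Q}_1^{\square n}$. An $n$-cube of $Q$ is a morphism $\mathrm{Q}_n\to Q$; for arrows $a_1,\dots,a_n$, the product $n$-cube $a_1\,\square\cdots\square\,a_n$ is the composite $\mathrm{Q}_n\xrightarrow{a_1\square\cdots\square a_n}Q^{\square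 n}\xrightarrow{\mu_n}Q$, where $a_i:\mathrm{Q}_1\to Q$ is the morphism determined by $a_i$ and $\mu_n$ is the iterated multiplication.
   Formalization: The unit 1 of G also acts trivially on arrows from both sides, $\mu(1,a)=a$ and $\mu(a,1)=a$ for every arrow a, so $g\cdot a$ and $a\cdot g$ form a genuine two-sided action. The paper assumes this as well. *)

theory Defs
  imports "HOL-Algebra.Group"
begin

text \<open>A multiplication \<mu> : Q \<box> Q \<rightarrow> Q is given by its three components:
  mv on V \<times> V (vertices of Q \<box> Q), mr on A \<times> V and ml on V \<times> A (arrows of Q \<box> Q).\<close>

definition mult_graph ::
  "'v set \<Rightarrow> 'a set \<Rightarrow> ('a \<Rightarrow> 'v) \<Rightarrow> ('a \<Rightarrow> 'v) \<Rightarrow>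
   ('v \<Rightarrow> 'v \<Rightarrow> 'v) \<Rightarrow> ('v \<Rightarrow> 'a \<Rightarrow> 'a) \<Rightarrow> ('a \<Rightarrow> 'v \<Rightarrow> 'a) \<Rightarrow> bool" where
  "mult_graph V A s t mv ml mr \<longleftrightarrow>
     \<comment> \<open>Q is a graph\<close>
     (\<forall>a\<in>A. s a \<in> V \<and> t a \<in> V) \<and>
     \<comment> \<open>\<mu> is a graph morphism Q \<box> Q \<rightarrow> Q\<close>
     (\<forall>g\<in>V. \<forall>h\<in>V. mv g h \<in> V) \<and>
     (\<forall>g\<in>V. \<forall>a\<in>A. ml g a \<in> A \<and> s (ml g a) = mv g (s a) \<and> t (ml g a) = mv g (t a)) \<and>
     (\<forall>a\<in>A. \<forall>h\<in>V. mr a h \<in> A \<and> s (mr a h) = mv (s a) h \<and> t (mr a h) = mv (t a) h) \<and>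
     \<comment> \<open>associativity \<mu> \<circ> (\<mu> \<box> id) = \<mu> \<circ> (id \<box> \<mu>) on vertices and the three kinds of arrows\<close>
     (\<forall>g\<in>V. \<forall>h\<in>V. \<forall>k\<in>V. mv (mv g h) k = mv g (mv h k)) \<and>
     (\<forall>a\<in>A. \<forall>h\<in>V. \<forall>k\<in>V. mr (mr a h) k = mr a (mv h k)) \<and>
     (\<forall>g\<in>V. \<forall>a\<in>A. \<forall>k\<in>V. mr (ml g a) k = ml g (mr a k)) \<and>
     (\<forall>g\<in>V. \<forall>h\<in>V. \<forall>a\<in>A. ml (mv g h) a = ml g (ml h a))"

definition group_like ::
  "'v set \<Rightarrow> 'a set \<Rightarrow> ('a \<Rightarrow> 'v) \<Rightarrow> ('a \<Rightarrow> 'v) \<Rightarrow>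
   ('v \<Rightarrow> 'v \<Rightarrow> 'v) \<Rightarrow> ('v \<Rightarrow> 'a \<Rightarrow> 'a) \<Rightarrow> ('a \<Rightarrow> 'v \<Rightarrow> 'a) \<Rightarrow> 'v \<Rightarrow> bool" where
  "group_like V A s t mv ml mr e \<longleftrightarrow>
     mult_graph V A s t mv ml mr \<and>
     group \<lparr>carrier = V, monoid.mult = mv, one = e\<rparr>"

fun mu :: "('v \<Rightarrow> 'v \<Rightarrow> 'v) \<Rightarrow> ('v \<Rightarrow> 'a \<Rightarrow> 'a) \<Rightarrow> ('a \<Rightarrow> 'v \<Rightarrow> 'a) \<Rightarrow>
           'v + 'a \<Rightarrow> 'v + 'a \<Rightarrow> 'v + 'a" where
  "mu mv ml mr (Inl g) (Inl h) = Inl (mv g h)"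
| "mu mv ml mr (Inl g) (Inr a) = Inr (ml g a)"
| "mu mv ml mr (Inr a) (Inl h) = Inr (mr a h)"
| "mu mv ml mr (Inr a) (Inr b) = undefined"

text \<open>Iterated multiplication \<mu>_n : Q^{\<box>n} \<rightarrow> Q, \<mu>_1 = id, \<mu>_n = \<mu> \<circ> (\<mu>_{n-1} \<box> id);
  an element of Q^{\<box>n} is a list of n entries, vertices (Inl) except at most one arrow (Inr).\<close>
definition mu_n :: "('v \<Rightarrow> 'v \<Rightarrow> 'v) \<Rightarrow> ('v \<Rightarrow> 'a \<Rightarrow> 'a) \<Rightarrow> ('a \<Rightarrow> 'v \<Rightarrow> 'a) \<Rightarrow>
           ('v + 'a) list \<Rightarrow> 'v + 'a" where
  "mu_n mv ml mr ws = foldl (mu mv ml mr) (hd ws) (tl ws)"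

text \<open>The cube graph Q_n = Q_1^{\<box>n}: vertices are bool lists of length n;
  arrows are bool option lists of length n with exactly one entry None (the arrow
  of Q_1 in that coordinate); source replaces None by False, target by True.\<close>
definition cube_verts :: "nat \<Rightarrow> bool list set" where
  "cube_verts n = {\<epsilon>. length \<epsilon> = n}"

definition cube_arrows :: "nat \<Rightarrow> bool option list set" where
  "cube_arrows n = {e. length e = n \<and> (\<exists>!i. i < n \<and> e ! i = None)}"

text \<open>The product n-cube a_1 \<box> ... \<box> a_n : Q_n \<rightarrow> Q as a pair (vertex map, arrow map),
  restricted to Q_n (undefined outside), so that HOL equality is equality of morphisms.\<close>
definition prod_cube ::
  "('a \<Rightarrow> 'v) \<Rightarrow> ('a \<Rightarrow> 'v) \<Rightarrow> ('v \<Rightarrow> 'v \<Rightarrow> 'v) \<Rightarrow> ('v \<Rightarrow> 'a \<Rightarrow> 'a) \<Rightarrow> ('a \<Rightarrow> 'v \<Rightarrow> 'a) \<Rightarrow>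
   'a list \<Rightarrow> (bool list \<Rightarrow> 'v) \<times> (bool option list \<Rightarrow> 'a)" where
  "prod_cube s t mv ml mr as =
     ((\<lambda>\<epsilon>. if \<epsilon> \<in> cube_verts (length as)
           then projl (mu_n mv ml mr (map2 (\<lambda>b a. Inl (if b then t a else s a)) \<epsilon> as))
           else undefined),
      (\<lambda>e. if e \<in> cube_arrows (length as)
           then projr (mu_n mv ml mr
                  (map2 (\<lambda>oc a. case oc of None \<Rightarrow> Inr a | Some b \<Rightarrow> Inl (if b then t a else s a)) e as))
           else undefined))"

end

theory Submission
  imports Defs
begin

definition okel :: "'v set \<Rightarrow> 'a set \<Rightarrow> 'v + 'a \<Rightarrow> bool" where
  "okel V A p = (case p of Inl v \<Rightarrow> v \<in> V | Inr a \<Rightarrow> a \<in> A)"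

definition nr :: "('v + 'a) list \<Rightarrow> nat" where
  "nr ws = length (filter (\<lambda>x. \<not> isl x) ws)"

locale GL =
  fixes V :: "'v set" and A :: "'a set" and s t :: "'a \<Rightarrow> 'v"
    and mv :: "'v \<Rightarrow> 'v \<Rightarrow> 'v" and ml :: "'v \<Rightarrow> 'a \<Rightarrow> 'a" and mr :: "'a \<Rightarrow> 'v \<Rightarrow> 'a"
    and e :: 'v
  assumes gl: "group_like V A s t mv ml mr e"
    and lu: "\<forall>a\<in>A. ml e a = a"
    and ru: "\<forall>a\<in>A. mr a e = a"
begin

lemma mg: "mult_graph V A s t mv ml mr" using gl unfolding group_like_def by blast
lemma grp: "group \<lparr>carrier = V, monoid.mult = mv, one = e\<rparr>" using gl unfolding group_like_def by blast

lemma src_in: "a \<in> A \<Longrightarrow> s a \<in> V" using mg unfolding mult_graph_def by blast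
lemma tgt_in: "a \<in> A \<Longrightarrow> t a \<in> V" using mg unfolding mult_graph_def by blast
lemma mv_in: "g \<in> V \<Longrightarrow> h \<in> V \<Longrightarrow> mv g h \<in> V" using mg unfolding mult_graph_def by blast
lemma ml_in: "g \<in> V \<Longrightarrow> a \<in> A \<Longrightarrow> ml g a \<in> A" using mg unfolding mult_graph_def by blast
lemma s_ml: "g \<in> V \<Longrightarrow> a \<in> A \<Longrightarrow> s (ml g a) = mv g (s a)" using mg unfolding mult_graph_def by blast
lemma t_ml: "g \<in> V \<Longrightarrow> a \<in> A \<Longrightarrow> t (ml g a) = mv g (t a)" using mg unfolding mult_graph_def by blast
lemma mr_in: "a \<in> A \<Longrightarrow> h \<in> V \<Longrightarrow> mr a h \<in> A" using mg unfolding mult_graph_def by blast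
lemma s_mr: "a \<in> A \<Longrightarrow> h \<in> V \<Longrightarrow> s (mr a h) = mv (s a) h" using mg unfolding mult_graph_def by blast
lemma t_mr: "a \<in> A \<Longrightarrow> h \<in> V \<Longrightarrow> t (mr a h) = mv (t a) h" using mg unfolding mult_graph_def by blast
lemma as_v: "g \<in> V \<Longrightarrow> h \<in> V \<Longrightarrow> k \<in> V \<Longrightarrow> mv (mv g h) k = mv g (mv h k)" using mg unfolding mult_graph_def by blast
lemma as_rr: "a \<in> A \<Longrightarrow> h \<in> V \<Longrightarrow> k \<in> V \<Longrightarrow> mr (mr a h) k = mr a (mv h k)" using mg unfolding mult_graph_def by blast
lemma as_lr: "g \<in> V \<Longrightarrow> a \<in> A \<Longrightarrow> k \<in> V \<Longrightarrow> mr (ml g a) k = ml g (mr a k)" using mg unfolding mult_graph_def by blast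
lemma as_ll: "g \<in> V \<Longrightarrow> h \<in> V \<Longrightarrow> a \<in> A \<Longrightarrow> ml (mv g h) a = ml g (ml h a)" using mg unfolding mult_graph_def by blast

lemma e_in: "e \<in> V" using monoid.one_closed[OF group.is_monoid[OF grp]] by simp
lemma e_l: "g \<in> V \<Longrightarrow> mv e g = g" using monoid.l_one[OF group.is_monoid[OF grp], of g] by simp
lemma e_r: "g \<in> V \<Longrightarrow> mv g e = g" using monoid.r_one[OF group.is_monoid[OF grp], of g] by simp

definition iv where "iv g = inv\<^bsub>\<lparr>carrier = V, monoid.mult = mv, one = e\<rparr>\<^esub> g"
lemma iv_in: "g \<in> V \<Longrightarrow> iv g \<in> V" using group.inv_closed[OF grp, of g] by (simp add: iv_def)
lemma iv_l: "g \<in> V \<Longrightarrow> mv (iv g) g = e" using group.l_inv[OF grp, of g] by (simp add: iv_def)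
lemma iv_r: "g \<in> V \<Longrightarrow> mv g (iv g) = e" using group.r_inv[OF grp, of g] by (simp add: iv_def)

abbreviation "ok \<equiv> okel V A"
abbreviation "mm \<equiv> mu mv ml mr"

lemma mu_ok: "ok p \<Longrightarrow> ok q \<Longrightarrow> isl p \<or> isl q \<Longrightarrow> ok (mm p q) \<and> (isl (mm p q) \<longleftrightarrow> isl p \<and> isl q)"
  by (cases p; cases q) (auto simp: okel_def mv_in ml_in mr_in)

lemma mu_assoc: "ok p \<Longrightarrow> ok q \<Longrightarrow> ok r \<Longrightarrow> nr [p,q,r] \<le> 1 \<Longrightarrow> mm (mm p q) r = mm p (mm q r)"
  by (cases p; cases q; cases r) (auto simp: okel_def nr_def as_v as_rr as_lr as_ll)

lemma fold_ok: "ok z \<Longrightarrow> \<forall>w\<in>set ws. ok w \<Longrightarrow> nr (z#ws) \<le> 1 \<Longrightarrow>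
   ok (foldl mm z ws) \<and> (isl (foldl mm z ws) \<longleftrightarrow> nr (z#ws) = 0)"
proof (induction ws arbitrary: z)
  case Nil then show ?case by (auto simp: nr_def)
next
  case (Cons w ws)
  have "isl z \<or> isl w" using Cons.prems(3) by (auto simp: nr_def split: if_splits)
  then have m: "ok (mm z w) \<and> (isl (mm z w) \<longleftrightarrow> isl z \<and> isl w)" using mu_ok Cons.prems by auto
  have "nr (mm z w # ws) = nr (z # w # ws)" using m \<open>isl z \<or> isl w\<close> by (auto simp: nr_def)
  then show ?case using Cons.IH[of "mm z w"] m Cons.prems by auto
qed

lemma fold_split: "ok z \<Longrightarrow> ok w \<Longrightarrow> \<forall>u\<in>set ws. ok u \<Longrightarrow> nr (z#w#ws) \<le> 1 \<Longrightarrow>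
   foldl mm z (w#ws) = mm z (foldl mm w ws)"
proof (induction ws rule: rev_induct)
  case Nil then show ?case by simp
next
  case (snoc u ws)
  have "nr (z#w#ws) \<le> nr (z#w#ws@[u])" by (simp add: nr_def)
  then have nr1: "nr (z#w#ws) \<le> 1" using snoc.prems(4) by simp
  have IH: "foldl mm z (w#ws) = mm z (foldl mm w ws)" using snoc nr1 by auto
  have F: "ok (foldl mm w ws) \<and> (isl (foldl mm w ws) \<longleftrightarrow> nr (w#ws) = 0)"
  proof -
    have "nr (w#ws) \<le> nr (z#w#ws)" by (simp add: nr_def)
    then show ?thesis using fold_ok[of w ws] snoc.prems nr1 by auto
  qed
  have d: "nr (z#w#ws@[u]) = nr [z] + nr (w#ws) + nr [u]" by (simp add: nr_def)
  have "nr [foldl mm w ws] \<le> nr (w#ws)" using F by (auto simp: nr_def Suc_le_eq)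
  moreover have "nr [z, foldl mm w ws, u] = nr [z] + nr [foldl mm w ws] + nr [u]" by (simp add: nr_def)
  ultimately have "nr [z, foldl mm w ws, u] \<le> 1" using d snoc.prems(4) by linarith
  then have "mm (mm z (foldl mm w ws)) u = mm z (mm (foldl mm w ws) u)"
    using mu_assoc F snoc.prems by auto
  then show ?case using IH by simp
qed


lemma mu_n_cons: "ws \<noteq> [] \<Longrightarrow> ok w \<Longrightarrow> \<forall>u\<in>set ws. ok u \<Longrightarrow> nr (w#ws) \<le> 1 \<Longrightarrow>
   mu_n mv ml mr (w#ws) = mm w (mu_n mv ml mr ws)"
proof (cases ws)
  case (Cons a list)
  assume "ok w" "\<forall>u\<in>set ws. ok u" "nr (w#ws) \<le> 1"
  then show ?thesis using fold_split[of w a list] Cons by (simp add: mu_n_def)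
qed simp

lemma mu_n_ok: "ws \<noteq> [] \<Longrightarrow> \<forall>u\<in>set ws. ok u \<Longrightarrow> nr ws \<le> 1 \<Longrightarrow>
   ok (mu_n mv ml mr ws) \<and> (isl (mu_n mv ml mr ws) \<longleftrightarrow> nr ws = 0)"
proof (cases ws)
  case (Cons a list)
  assume "\<forall>u\<in>set ws. ok u" "nr ws \<le> 1"
  then show ?thesis using fold_ok[of a list] Cons by (simp add: mu_n_def)
qed simp

lemma cube_verts_Suc: "x \<in> cube_verts (Suc m) \<longleftrightarrow> (\<exists>b \<epsilon>. length \<epsilon> = m \<and> x = b # \<epsilon>)"
  unfolding cube_verts_def by (cases x) auto

lemma cube_arrows_0: "cube_arrows 0 = {}"
  by (auto simp: cube_arrows_def)

lemma cube_arrows_Suc: "x \<in> cube_arrows (Suc m) \<longleftrightarrow>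
   (\<exists>\<epsilon>. length \<epsilon> = m \<and> x = None # map Some \<epsilon>) \<or> (\<exists>b e'. e' \<in> cube_arrows m \<and> x = Some b # e')" (is "?L \<longleftrightarrow> ?R")
proof
  assume L: ?L
  then obtain c e' where x: "x = c # e'" and len: "length e' = m"
    unfolding cube_arrows_def by (cases x) auto
  from L obtain i where i: "i < Suc m" "x ! i = None" and uq: "\<And>j. j < Suc m \<Longrightarrow> x ! j = None \<Longrightarrow> j = i"
    unfolding cube_arrows_def by blast
  show ?R
  proof (cases c)
    case None
    then have "i = 0" using uq[of 0] x by simp
    have "\<forall>j<m. e' ! j \<noteq> None"
    proof (intro allI impI notI)
      fix j assume "j < m" "e' ! j = None"
      then have "Suc j = i" using uq[of "Suc j"] x by simp
      then show False using \<open>i = 0\<close> by simp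
    qed
    then have "e' = map Some (map the e')"
      by (intro nth_equalityI) (auto simp: len)
    then show ?thesis using None x len by (metis length_map)
  next
    case (Some b)
    then obtain j where j: "i = Suc j" using i x by (cases i) auto
    have "e' \<in> cube_arrows m"
      unfolding cube_arrows_def
    proof (rule CollectI, rule conjI[OF len], rule ex1I[of _ j])
      show "j < m \<and> e' ! j = None" using i j x by simp
      fix k assume "k < m \<and> e' ! k = None"
      then show "k = j" using uq[of "Suc k"] x j by simp
    qed
    then show ?thesis using x Some by blast
  qed
next
  assume ?R
  then show ?L
  proof
    assume "\<exists>\<epsilon>. length \<epsilon> = m \<and> x = None # map Some \<epsilon>"
    then obtain \<epsilon> where "length \<epsilon> = m" "x = None # map Some \<epsilon>" by blast
    then show ?L unfolding cube_arrows_def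
      apply (auto intro!: ex1I[of _ 0] simp: nth_Cons' split: if_splits)
      subgoal for i by (cases i) auto
      done
  next
    assume "\<exists>b e'. e' \<in> cube_arrows m \<and> x = Some b # e'"
    then obtain b e' where e': "e' \<in> cube_arrows m" and x: "x = Some b # e'" by blast
    from e' obtain j where j: "j < m" "e' ! j = None" and uq: "\<And>k. k < m \<Longrightarrow> e' ! k = None \<Longrightarrow> k = j"
      and len: "length e' = m" unfolding cube_arrows_def by blast
    show ?L unfolding cube_arrows_def
    proof (rule CollectI, rule conjI[OF _ ex1I[of _ "Suc j"]])
      show "length x = Suc m" using x len by simp
      show "Suc j < Suc m \<and> x ! Suc j = None" using j x by simp
      fix k assume k: "k < Suc m \<and> x ! k = None"
      then obtain k' where "k = Suc k'" using x by (cases k) auto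
      then show "k = Suc j" using uq[of k'] k x by simp
    qed
  qed
qed


abbreviation VL :: "bool list \<Rightarrow> 'a list \<Rightarrow> ('v + 'a) list" where "VL \<epsilon> as \<equiv> map2 (\<lambda>b a. Inl (if b then t a else s a)) \<epsilon> as"
abbreviation AL :: "bool option list \<Rightarrow> 'a list \<Rightarrow> ('v + 'a) list" where "AL x as \<equiv> map2 (\<lambda>oc a. case oc of None \<Rightarrow> Inr a | Some b \<Rightarrow> Inl (if b then t a else s a)) x as"
abbreviation "cv as \<equiv> fst (prod_cube s t mv ml mr as)"
abbreviation "ca as \<equiv> snd (prod_cube s t mv ml mr as)"

lemma VL_ok: "set as \<subseteq> A \<Longrightarrow> (\<forall>u\<in>set (VL \<epsilon> as). ok u) \<and> nr (VL \<epsilon> as) = 0"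
  apply (auto simp: nr_def okel_def filter_empty_conv dest!: set_zip_rightD)
  using src_in tgt_in by blast+

lemma AL_Some: "AL (map Some \<epsilon>) as = VL \<epsilon> as"
proof (induction \<epsilon> arbitrary: as)
  case (Cons b \<epsilon>) then show ?case by (cases as) auto
qed simp

lemma AL_ok: "set as \<subseteq> A \<Longrightarrow> x \<in> cube_arrows (length as) \<Longrightarrow> (\<forall>u\<in>set (AL x as). ok u) \<and> nr (AL x as) = 1"
proof (induction as arbitrary: x)
  case Nil then show ?case by (simp add: cube_arrows_0)
next
  case (Cons a as)
  from Cons.prems(2) consider (N) \<epsilon> where "length \<epsilon> = length as" "x = None # map Some \<epsilon>"
    | (S) b e' where "e' \<in> cube_arrows (length as)" "x = Some b # e'"
    using cube_arrows_Suc[of x "length as"] by auto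
  then show ?case
  proof cases
    case N then show ?thesis using VL_ok[of as \<epsilon>] Cons.prems by (simp add: AL_Some nr_def okel_def)
  next
    case S then show ?thesis using Cons.IH[of e'] Cons.prems by (auto simp add: nr_def okel_def src_in tgt_in)
  qed
qed

lemma V1: "set as \<subseteq> A \<Longrightarrow> as \<noteq> [] \<Longrightarrow> length \<epsilon> = length as \<Longrightarrow>
   mu_n mv ml mr (VL \<epsilon> as) = Inl (cv as \<epsilon>) \<and> cv as \<epsilon> \<in> V"
proof -
  assume a: "set as \<subseteq> A" "as \<noteq> []" "length \<epsilon> = length as"
  then have ne: "VL \<epsilon> as \<noteq> []" by (cases \<epsilon>; cases as) auto
  have "ok (mu_n mv ml mr (VL \<epsilon> as)) \<and> isl (mu_n mv ml mr (VL \<epsilon> as))"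
  proof -
    have vo: "(\<forall>u\<in>set (VL \<epsilon> as). ok u) \<and> nr (VL \<epsilon> as) = 0" using VL_ok[OF a(1)] .
    then have z: "nr (VL \<epsilon> as) = 0" by (rule conjunct2)
    have "nr (VL \<epsilon> as) \<le> 1" unfolding z by simp
    then show ?thesis using mu_n_ok[OF ne] vo by simp
  qed
  moreover have "cv as \<epsilon> = projl (mu_n mv ml mr (VL \<epsilon> as))"
    using a(3) by (simp add: prod_cube_def cube_verts_def)
  ultimately show ?thesis by (cases "mu_n mv ml mr (VL \<epsilon> as)") (auto simp: okel_def)
qed

lemma A1: "set as \<subseteq> A \<Longrightarrow> x \<in> cube_arrows (length as) \<Longrightarrow>
   mu_n mv ml mr (AL x as) = Inr (ca as x) \<and> ca as x \<in> A"
proof -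
  assume a: "set as \<subseteq> A" "x \<in> cube_arrows (length as)"
  have o: "(\<forall>u\<in>set (AL x as). ok u) \<and> nr (AL x as) = 1" using AL_ok[OF a] .
  then have ne: "AL x as \<noteq> []" by (auto simp: nr_def)
  have "ok (mu_n mv ml mr (AL x as)) \<and> \<not> isl (mu_n mv ml mr (AL x as))"
    using mu_n_ok[OF ne] o by simp
  moreover have "ca as x = projr (mu_n mv ml mr (AL x as))"
    using a(2) by (simp add: prod_cube_def)
  ultimately show ?thesis by (cases "mu_n mv ml mr (AL x as)") (auto simp: okel_def)
qed


lemma vb_in: "a \<in> A \<Longrightarrow> (if b then t a else s a) \<in> V" using src_in tgt_in by auto

lemma C1: "a \<in> A \<Longrightarrow> set bs \<subseteq> A \<Longrightarrow> bs \<noteq> [] \<Longrightarrow> length \<epsilon> = length bs \<Longrightarrow>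
  cv (a#bs) (b#\<epsilon>) = mv (if b then t a else s a) (cv bs \<epsilon>)"
proof -
  assume a: "a \<in> A" "set bs \<subseteq> A" "bs \<noteq> []" "length \<epsilon> = length bs"
  have ne: "VL \<epsilon> bs \<noteq> []" using a by (cases \<epsilon>; cases bs) auto
  have vo: "(\<forall>u\<in>set (VL \<epsilon> bs). ok u) \<and> nr (VL \<epsilon> bs) = 0" using VL_ok[OF a(2)] .
  have h: "nr (Inl (if b then t a else s a) # VL \<epsilon> bs) \<le> 1" using vo by (simp add: nr_def)
  have "mu_n mv ml mr (VL (b#\<epsilon>) (a#bs)) = mm (Inl (if b then t a else s a)) (mu_n mv ml mr (VL \<epsilon> bs))"
    using mu_n_cons[OF ne _ _ h] vo vb_in[OF a(1)] by (simp add: okel_def)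
  also have "\<dots> = Inl (mv (if b then t a else s a) (cv bs \<epsilon>))" using V1[OF a(2,3,4)] by simp
  finally show ?thesis using a(4) by (simp add: prod_cube_def cube_verts_def)
qed

lemma C2: "a \<in> A \<Longrightarrow> set bs \<subseteq> A \<Longrightarrow> bs \<noteq> [] \<Longrightarrow> length \<epsilon> = length bs \<Longrightarrow>
  ca (a#bs) (None # map Some \<epsilon>) = mr a (cv bs \<epsilon>)"
proof -
  assume a: "a \<in> A" "set bs \<subseteq> A" "bs \<noteq> []" "length \<epsilon> = length bs"
  have ne: "VL \<epsilon> bs \<noteq> []" using a by (cases \<epsilon>; cases bs) auto
  have vo: "(\<forall>u\<in>set (VL \<epsilon> bs). ok u) \<and> nr (VL \<epsilon> bs) = 0" using VL_ok[OF a(2)] .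
  have h: "nr (Inr a # VL \<epsilon> bs) \<le> 1" using vo by (simp add: nr_def)
  have mem: "None # map Some \<epsilon> \<in> cube_arrows (length (a#bs))" using cube_arrows_Suc a(4) by auto
  have "mu_n mv ml mr (AL (None # map Some \<epsilon>) (a#bs)) = mm (Inr a) (mu_n mv ml mr (VL \<epsilon> bs))"
    using mu_n_cons[OF ne _ _ h] vo a(1) by (simp add: okel_def AL_Some)
  also have "\<dots> = Inr (mr a (cv bs \<epsilon>))" using V1[OF a(2,3,4)] by simp
  finally show ?thesis using mem unfolding prod_cube_def by simp
qed

lemma C3: "a \<in> A \<Longrightarrow> set bs \<subseteq> A \<Longrightarrow> x \<in> cube_arrows (length bs) \<Longrightarrow>
  ca (a#bs) (Some b # x) = ml (if b then t a else s a) (ca bs x)"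
proof -
  assume a: "a \<in> A" "set bs \<subseteq> A" "x \<in> cube_arrows (length bs)"
  have o: "(\<forall>u\<in>set (AL x bs). ok u) \<and> nr (AL x bs) = 1" using AL_ok[OF a(2,3)] .
  then have ne: "AL x bs \<noteq> []" by (auto simp: nr_def)
  have h: "nr (Inl (if b then t a else s a) # AL x bs) \<le> 1" using o by (simp add: nr_def)
  have mem: "Some b # x \<in> cube_arrows (length (a#bs))" using cube_arrows_Suc a(3) by auto
  have "mu_n mv ml mr (AL (Some b # x) (a#bs)) = mm (Inl (if b then t a else s a)) (mu_n mv ml mr (AL x bs))"
    using mu_n_cons[OF ne _ _ h] o vb_in[OF a(1)] by (simp add: okel_def)
  also have "\<dots> = Inr (ml (if b then t a else s a) (ca bs x))" using A1[OF a(2,3)] by simp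
  finally show ?thesis using mem unfolding prod_cube_def by simp
qed

lemma S1: "cv [a] [b] = (if b then t a else s a)"
  by (simp add: prod_cube_def cube_verts_def mu_n_def)

lemma S2: "ca [a] [None] = a"
proof -
  have "[None] \<in> cube_arrows (length [a])" by (auto simp: cube_arrows_def)
  then show ?thesis by (simp add: prod_cube_def mu_n_def)
qed

lemma cube_eq: "length as = length cs \<Longrightarrow> (\<forall>\<epsilon>\<in>cube_verts (length as). cv as \<epsilon> = cv cs \<epsilon>) \<Longrightarrow>
   (\<forall>x\<in>cube_arrows (length as). ca as x = ca cs x) \<Longrightarrow> prod_cube s t mv ml mr as = prod_cube s t mv ml mr cs"
  unfolding prod_cube_def by (auto simp: fun_eq_iff)


abbreviation "cube \<equiv> prod_cube s t mv ml mr"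

lemma cong: "a \<in> A \<Longrightarrow> set bs \<subseteq> A \<Longrightarrow> set cs \<subseteq> A \<Longrightarrow> bs \<noteq> [] \<Longrightarrow> length bs = length cs \<Longrightarrow>
  cube bs = cube cs \<Longrightarrow> cube (a#bs) = cube (a#cs)"
proof -
  assume a: "a \<in> A" "set bs \<subseteq> A" "set cs \<subseteq> A" "bs \<noteq> []" "length bs = length cs" "cube bs = cube cs"
  have cne: "cs \<noteq> []" using a(4,5) by auto
  show ?thesis
  proof (rule cube_eq)
    show "length (a#bs) = length (a#cs)" using a by simp
    show "\<forall>\<epsilon>\<in>cube_verts (length (a#bs)). cv (a#bs) \<epsilon> = cv (a#cs) \<epsilon>"
    proof
      fix \<epsilon> assume "\<epsilon> \<in> cube_verts (length (a#bs))"
      then obtain b \<epsilon>' where "\<epsilon> = b # \<epsilon>'" "length \<epsilon>' = length bs" using cube_verts_Suc by auto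
      then show "cv (a#bs) \<epsilon> = cv (a#cs) \<epsilon>" using C1[OF a(1,2,4)] C1[OF a(1,3) cne] a(5,6) by simp
    qed
    show "\<forall>x\<in>cube_arrows (length (a#bs)). ca (a#bs) x = ca (a#cs) x"
    proof
      fix x assume "x \<in> cube_arrows (length (a#bs))"
      then consider (N) \<epsilon> where "length \<epsilon> = length bs" "x = None # map Some \<epsilon>"
        | (S) b e' where "e' \<in> cube_arrows (length bs)" "x = Some b # e'"
        using cube_arrows_Suc[of x "length bs"] by auto
      then show "ca (a#bs) x = ca (a#cs) x"
      proof cases
        case N then show ?thesis using C2[OF a(1,2,4)] C2[OF a(1,3) cne] a(5,6) by simp
      next
        case S then show ?thesis using C3[OF a(1,2)] C3[OF a(1,3)] a(5,6) by simp
      qed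
    qed
  qed
qed

lemma mv_cancel: "g \<in> V \<Longrightarrow> x \<in> V \<Longrightarrow> y \<in> V \<Longrightarrow> mv g x = mv g y \<Longrightarrow> x = y"
  by (metis as_v iv_in iv_l e_l)

lemma ml_cancel: "g \<in> V \<Longrightarrow> x \<in> A \<Longrightarrow> y \<in> A \<Longrightarrow> ml g x = ml g y \<Longrightarrow> x = y"
  by (metis as_ll iv_in iv_l lu)

lemma cancel: "a \<in> A \<Longrightarrow> set bs \<subseteq> A \<Longrightarrow> set cs \<subseteq> A \<Longrightarrow> bs \<noteq> [] \<Longrightarrow> length bs = length cs \<Longrightarrow>
  cube (a#bs) = cube (a#cs) \<Longrightarrow> cube bs = cube cs"
proof -
  assume a: "a \<in> A" "set bs \<subseteq> A" "set cs \<subseteq> A" "bs \<noteq> []" "length bs = length cs" "cube (a#bs) = cube (a#cs)"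
  have cne: "cs \<noteq> []" using a(4,5) by auto
  show ?thesis
  proof (rule cube_eq)
    show "length bs = length cs" using a by simp
    show "\<forall>\<epsilon>\<in>cube_verts (length bs). cv bs \<epsilon> = cv cs \<epsilon>"
    proof
      fix \<epsilon> assume "\<epsilon> \<in> cube_verts (length bs)"
      then have l: "length \<epsilon> = length bs" by (simp add: cube_verts_def)
      have "cv (a#bs) (False#\<epsilon>) = cv (a#cs) (False#\<epsilon>)" using a(6) by simp
      then have "mv (s a) (cv bs \<epsilon>) = mv (s a) (cv cs \<epsilon>)"
        using C1[OF a(1,2,4) l] C1[OF a(1,3) cne] l a(5) by simp
      then show "cv bs \<epsilon> = cv cs \<epsilon>"
        using mv_cancel src_in[OF a(1)] V1[OF a(2,4) l] V1[OF a(3) cne] l a(5) by simp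
    qed
    show "\<forall>x\<in>cube_arrows (length bs). ca bs x = ca cs x"
    proof
      fix x assume x: "x \<in> cube_arrows (length bs)"
      have "ca (a#bs) (Some False#x) = ca (a#cs) (Some False#x)" using a(6) by simp
      then have "ml (s a) (ca bs x) = ml (s a) (ca cs x)"
        using C3[OF a(1,2) x] C3[OF a(1,3)] x a(5) by simp
      then show "ca bs x = ca cs x"
        using ml_cancel src_in[OF a(1)] A1[OF a(2) x] A1[OF a(3)] x a(5) by simp
    qed
  qed
qed

lemma swap: "a \<in> A \<Longrightarrow> b \<in> A \<Longrightarrow> h \<in> V \<Longrightarrow> set rest \<subseteq> A \<Longrightarrow>
  cube (a # ml h b # rest) = cube (mr a h # b # rest)"
proof -
  assume a: "a \<in> A" "b \<in> A" "h \<in> V" "set rest \<subseteq> A"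
  show ?thesis
  proof (rule cube_eq)
    show "length (a # ml h b # rest) = length (mr a h # b # rest)" by simp
    show "\<forall>\<epsilon>\<in>cube_verts (length (a # ml h b # rest)). cv (a # ml h b # rest) \<epsilon> = cv (mr a h # b # rest) \<epsilon>"
    proof
      fix \<epsilon> assume m: "\<epsilon> \<in> cube_verts (length (a # ml h b # rest))"
      obtain b1 \<epsilon>1 where e1: "\<epsilon> = b1 # \<epsilon>1" "length \<epsilon>1 = Suc (length rest)"
        using m cube_verts_Suc[of \<epsilon> "Suc (length rest)"] by auto
      obtain b2 \<epsilon>' where e2: "\<epsilon>1 = b2 # \<epsilon>'" using e1(2) by (cases \<epsilon>1) auto
      have e: "\<epsilon> = b1 # b2 # \<epsilon>'" using e1 e2 by simp
      show "cv (a # ml h b # rest) \<epsilon> = cv (mr a h # b # rest) \<epsilon>"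
        using m a unfolding e
        by (cases b1; cases b2) (simp_all add: prod_cube_def cube_verts_def mu_n_def s_ml t_ml s_mr t_mr as_v src_in tgt_in)
    qed
    show "\<forall>x\<in>cube_arrows (length (a # ml h b # rest)). ca (a # ml h b # rest) x = ca (mr a h # b # rest) x"
    proof
      fix x assume m: "x \<in> cube_arrows (length (a # ml h b # rest))"
      have m': "x \<in> cube_arrows (length (mr a h # b # rest))" using m by simp
      from m consider (N) \<epsilon> where "length \<epsilon> = Suc (length rest)" "x = None # map Some \<epsilon>"
        | (S) b1 x' where "x' \<in> cube_arrows (Suc (length rest))" "x = Some b1 # x'"
        using cube_arrows_Suc[of x "Suc (length rest)"] by auto
      then show "ca (a # ml h b # rest) x = ca (mr a h # b # rest) x"
      proof cases
        case N
        then obtain b2 \<epsilon>' where e: "x = None # Some b2 # map Some \<epsilon>'" using m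
          by (cases \<epsilon>) auto
        show ?thesis using m m' a unfolding e
          by (cases b2) (simp_all add: prod_cube_def mu_n_def s_ml t_ml s_mr t_mr as_v as_rr src_in tgt_in)
      next
        case S
        from S(1) consider (N2) \<epsilon>' where "x' = None # map Some \<epsilon>'"
          | (S2) b2 x'' where "x' = Some b2 # x''"
          using cube_arrows_Suc[of x' "length rest"] by auto
        then show ?thesis
        proof cases
          case N2
          show ?thesis using m m' a unfolding S(2) N2
            by (cases b1) (simp_all add: prod_cube_def mu_n_def s_ml t_ml s_mr t_mr as_v as_ll src_in tgt_in)
        next
          case S2
          show ?thesis using m m' a unfolding S(2) S2
            by (cases b1; cases b2) (simp_all add: prod_cube_def mu_n_def s_ml t_ml s_mr t_mr as_v src_in tgt_in)
        qed
      qed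
    qed
  qed
qed


lemma falses: "set xs \<subseteq> {x \<in> A. s x = e} \<Longrightarrow> xs \<noteq> [] \<Longrightarrow> cv xs (replicate (length xs) False) = e"
proof (induction xs)
  case Nil then show ?case by simp
next
  case (Cons x xs)
  show ?case
  proof (cases "xs = []")
    case True then show ?thesis using Cons.prems S1 by simp
  next
    case False
    have "cv (x#xs) (False # replicate (length xs) False) = mv (s x) (cv xs (replicate (length xs) False))"
      using C1[of x xs "replicate (length xs) False" False] Cons.prems False by auto
    then show ?thesis using Cons.IH Cons.prems False e_l e_in by simp
  qed
qed

lemma norm: "a \<in> A \<Longrightarrow> s a \<in> V \<and> ml (iv (s a)) a \<in> A \<and> s (ml (iv (s a)) a) = e \<and> ml (s a) (ml (iv (s a)) a) = a"
  using src_in[of a] iv_in[of "s a"] ml_in s_ml iv_l iv_r as_ll[of "s a" "iv (s a)" a] lu by auto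

lemma head_val: "g \<in> V \<Longrightarrow> x \<in> A \<Longrightarrow> s x = e \<Longrightarrow> set xs \<subseteq> {x \<in> A. s x = e} \<Longrightarrow>
   ca (ml g x # xs) (None # replicate (length xs) (Some False)) = ml g x"
proof (cases "xs = []")
  case True then show ?thesis using S2 by simp
next
  case False
  assume a: "g \<in> V" "x \<in> A" "s x = e" "set xs \<subseteq> {x \<in> A. s x = e}"
  have A: "set xs \<subseteq> A" using a(4) by auto
  have "ca (ml g x # xs) (None # map Some (replicate (length xs) False)) = mr (ml g x) (cv xs (replicate (length xs) False))"
    using C2[OF ml_in[OF a(1,2)] A False, of "replicate (length xs) False"] by simp
  then show ?thesis using falses[OF a(4) False] ru ml_in[OF a(1,2)] by (simp add: map_replicate)
qed

lemma inj_aux: "set xs \<subseteq> {x \<in> A. s x = e} \<Longrightarrow> set ys \<subseteq> {x \<in> A. s x = e} \<Longrightarrow> length xs = length ys \<Longrightarrow>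
  xs \<noteq> [] \<Longrightarrow> g \<in> V \<Longrightarrow> g' \<in> V \<Longrightarrow>
  cube (ml g (hd xs) # tl xs) = cube (ml g' (hd ys) # tl ys) \<Longrightarrow> g = g' \<and> xs = ys"
proof (induction xs arbitrary: ys g g')
  case Nil then show ?case by simp
next
  case (Cons x xs)
  obtain y ys' where ys: "ys = y # ys'" using Cons.prems(3) by (cases ys) auto
  have x: "x \<in> A" "s x = e" "set xs \<subseteq> {x \<in> A. s x = e}" using Cons.prems(1) by auto
  have y: "y \<in> A" "s y = e" "set ys' \<subseteq> {x \<in> A. s x = e}" using Cons.prems(2) ys by auto
  have len: "length xs = length ys'" using Cons.prems(3) ys by simp
  have eq: "cube (ml g x # xs) = cube (ml g' y # ys')" using Cons.prems(7) ys by simp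
  have "ca (ml g x # xs) (None # replicate (length xs) (Some False)) = ca (ml g' y # ys') (None # replicate (length ys') (Some False))"
    using eq len by simp
  then have gx: "ml g x = ml g' y" using head_val[OF Cons.prems(5) x] head_val[OF Cons.prems(6) y] by simp
  have "s (ml g x) = g" using s_ml[OF Cons.prems(5) x(1)] x(2) e_r Cons.prems(5) by simp
  moreover have "s (ml g' y) = g'" using s_ml[OF Cons.prems(6) y(1)] y(2) e_r Cons.prems(6) by simp
  ultimately have gg: "g = g'" using gx by simp
  have xy: "x = y" using ml_cancel[OF Cons.prems(5) x(1) y(1)] gx gg by simp
  have "xs = ys'"
  proof (cases "xs = []")
    case True then show ?thesis using len by simp
  next
    case False
    have XA: "set xs \<subseteq> A" "set ys' \<subseteq> A" using x(3) y(3) by auto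
    have "cube xs = cube ys'"
      using cancel[OF ml_in[OF Cons.prems(5) x(1)] XA False len] eq gg xy by simp
    moreover have "ml e (hd xs) # tl xs = xs" using False XA lu by (cases xs) auto
    moreover have "ml e (hd ys') # tl ys' = ys'" using False len XA lu by (cases ys') auto
    ultimately show ?thesis using Cons.IH[OF x(3) y(3) len False e_in e_in] by simp
  qed
  then show ?case using gg xy ys by simp
qed

lemma surj_aux: "set as \<subseteq> A \<Longrightarrow> as \<noteq> [] \<Longrightarrow>
  \<exists>g\<in>V. \<exists>xs. length xs = length as \<and> set xs \<subseteq> {x \<in> A. s x = e} \<and> cube as = cube (ml g (hd xs) # tl xs)"
proof (induction as)
  case Nil then show ?case by simp
next
  case (Cons a rest)
  have a: "a \<in> A" "set rest \<subseteq> A" using Cons.prems by auto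
  show ?case
  proof (cases "rest = []")
    case True
    show ?thesis using norm[OF a(1)] True
      by (intro bexI[of _ "s a"] exI[of _ "[ml (iv (s a)) a]"]) auto
  next
    case False
    obtain h ys where h: "h \<in> V" "length ys = length rest" "set ys \<subseteq> {x \<in> A. s x = e}"
      "cube rest = cube (ml h (hd ys) # tl ys)" using Cons.IH[OF a(2) False] by blast
    obtain y ys' where ys: "ys = y # ys'" using h(2) False by (cases ys) auto
    have y: "y \<in> A" "set ys' \<subseteq> A" using h(3) ys by auto
    have "cube (a # rest) = cube (a # ml h y # ys')"
      using cong[OF a(1) a(2) _ False] h ys ml_in[OF h(1) y(1)] y by simp
    also have "\<dots> = cube (mr a h # y # ys')" using swap[OF a(1) y(1) h(1) y(2)] .
    finally have c: "cube (a # rest) = cube (mr a h # y # ys')" .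
    have a': "mr a h \<in> A" using mr_in[OF a(1) h(1)] .
    let ?g = "s (mr a h)" let ?x = "ml (iv (s (mr a h))) (mr a h)"
    show ?thesis using norm[OF a'] c h ys
      by (intro bexI[of _ ?g] exI[of _ "?x # y # ys'"]) auto
  qed
qed

end

theorem mainTheorem5:
  fixes V :: "'v set" and A :: "'a set" and s t :: "'a \<Rightarrow> 'v"
    and mv :: "'v \<Rightarrow> 'v \<Rightarrow> 'v" and ml :: "'v \<Rightarrow> 'a \<Rightarrow> 'a" and mr :: "'a \<Rightarrow> 'v \<Rightarrow> 'a"
    and e :: 'v and n :: nat
  assumes "group_like V A s t mv ml mr e"
    and left_unit: "\<forall>a\<in>A. ml e a = a"
    and right_unit: "\<forall>a\<in>A. mr a e = a"
    and "n \<ge> 1"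
  shows "bij_betw
           (\<lambda>(g, xs). prod_cube s t mv ml mr (ml g (hd xs) # tl xs))
           (V \<times> {xs. length xs = n \<and> set xs \<subseteq> {x \<in> A. s x = e}})
           {prod_cube s t mv ml mr as | as. length as = n \<and> set as \<subseteq> A}"
proof -
  interpret GL V A s t mv ml mr e using assms by (unfold_locales) auto
  show ?thesis
  unfolding bij_betw_def
  proof (intro conjI)
    show "inj_on (\<lambda>(g, xs). cube (ml g (hd xs) # tl xs)) (V \<times> {xs. length xs = n \<and> set xs \<subseteq> {x \<in> A. s x = e}})"
    proof (rule inj_onI)
      fix p q
      assume P: "p \<in> V \<times> {xs. length xs = n \<and> set xs \<subseteq> {x \<in> A. s x = e}}"
        and Q: "q \<in> V \<times> {xs. length xs = n \<and> set xs \<subseteq> {x \<in> A. s x = e}}"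
        and F: "(\<lambda>(g, xs). cube (ml g (hd xs) # tl xs)) p = (\<lambda>(g, xs). cube (ml g (hd xs) # tl xs)) q"
      obtain g xs where p: "p = (g, xs)" by (cases p)
      obtain g' ys where q: "q = (g', ys)" by (cases q)
      have H: "g \<in> V" "g' \<in> V" "length xs = n" "set xs \<subseteq> {x \<in> A. s x = e}" "length ys = n"
        "set ys \<subseteq> {x \<in> A. s x = e}" "cube (ml g (hd xs) # tl xs) = cube (ml g' (hd ys) # tl ys)"
        using P Q F p q by auto
      have ne: "xs \<noteq> []" using assms(4) H(3) by auto
      show "p = q" using inj_aux[of xs ys g g'] H ne p q by simp
    qed
    show "(\<lambda>(g, xs). cube (ml g (hd xs) # tl xs)) ` (V \<times> {xs. length xs = n \<and> set xs \<subseteq> {x \<in> A. s x = e}}) =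
      {cube as | as. length as = n \<and> set as \<subseteq> A}"
    proof
      show "(\<lambda>(g, xs). cube (ml g (hd xs) # tl xs)) ` (V \<times> {xs. length xs = n \<and> set xs \<subseteq> {x \<in> A. s x = e}}) \<subseteq>
        {cube as | as. length as = n \<and> set as \<subseteq> A}"
      proof (rule image_subsetI)
        fix p assume P: "p \<in> V \<times> {xs. length xs = n \<and> set xs \<subseteq> {x \<in> A. s x = e}}"
        obtain g xs where p: "p = (g, xs)" by (cases p)
        have h: "g \<in> V" "length xs = n" "set xs \<subseteq> {x \<in> A. s x = e}" using P p by auto
        obtain x xs' where xs: "xs = x # xs'" using assms(4) h(2) by (cases xs) auto
        have "cube (ml g (hd xs) # tl xs) \<in> {cube as | as. length as = n \<and> set as \<subseteq> A}"
          using h xs ml_in[OF h(1)] by (intro CollectI exI[of _ "ml g x # xs'"]) auto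
        then show "(\<lambda>(g, xs). cube (ml g (hd xs) # tl xs)) p \<in> {cube as | as. length as = n \<and> set as \<subseteq> A}"
          using p by simp
      qed
      show "{cube as | as. length as = n \<and> set as \<subseteq> A} \<subseteq>
        (\<lambda>(g, xs). cube (ml g (hd xs) # tl xs)) ` (V \<times> {xs. length xs = n \<and> set xs \<subseteq> {x \<in> A. s x = e}})"
      proof (rule subsetI)
        fix c assume "c \<in> {cube as | as. length as = n \<and> set as \<subseteq> A}"
        then obtain as where h: "c = cube as" "length as = n" "set as \<subseteq> A" by blast
        have "as \<noteq> []" using assms(4) h(2) by auto
        then obtain g xs where G: "g \<in> V" "length xs = length as" "set xs \<subseteq> {x \<in> A. s x = e}"
          "cube as = cube (ml g (hd xs) # tl xs)" using surj_aux[OF h(3)] by blast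
        show "c \<in> (\<lambda>(g, xs). cube (ml g (hd xs) # tl xs)) ` (V \<times> {xs. length xs = n \<and> set xs \<subseteq> {x \<in> A. s x = e}})"
          using h G by (intro image_eqI[of _ _ "(g, xs)"]) auto
      qed
    qed
  qed
qed

end
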